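(* Let $\bm{A}=[\bm{A}_1\ \bm{A}_2]\in\mathbb{R}^{m\times n}$ with $\bm{A}_j\in\mathbb{R}^{m\times n_j}$, $n=n_1+n_2$, have full column rank, and suppose $\bm{A}_1^\top\bm{A}_1=\bm{I}_{n_1}$, $\bm{A}_2^\top\bm{A}_2=\bm{I}_{n_2}$ and $\bm{A}_2^\top\bm{A}_1\neq 0$. Then $\rho_{\mathrm{BGD}}^*\le(\rho_{\mathrm{HB}}^* )^2$.
   Context: $\rho(\cdot)$ denotes the spectral radius (maximum modulus of eigenvalues). For $\gamma_1,\gamma_2>0$ let $\bm{M}(\gamma_1,\gamma_2):=\left(\bm{I}-\begin{bmatrix}0&0\\ \gamma_2\bm{A}_2^\top\bm{A}_1&\gamma_2\bm{A}_2^\top\bm{A}_2\end{bmatrix}\right)\left(\bm{I}-\begin{bmatrix}\gamma_1\bm{A}_1^\top\bm{A}_1&\gamma_1\bm{A}_1^\top\bm{A}_2\\0&0\end{bmatrix}\right)$, the iteration matrix of two-block gradient descent ($\bm{x}_1^+=\bm{x}_1-\gamma_1\bm{A}_1^\top(\bm{A}\bm{x}-\bm{y})$, then $\bm{x}_2^+=\bm{x}_2-\gamma_2\bm{A}_2^\top(\bm{A}_1\bm{x}_1^++\bm{A}_2\bm{x}_2-\bm{y})$) on $F(\bm{x})=\frac12\|\bm{A}\bm{x}-\bm{y}\|_2^2$. Define $\rho_{\mathrm{BGD}}^*:=\min_{\gamma_1>0,\gamma_2>0}\rho(\bm{M}(\gamma_1,\gamma_2))$. For $\alpha>0,\beta\ge0$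 let $\bm{N}(\alpha,\beta):=\begin{bmatrix}0&\bm{I}\\-\beta\bm{I}&(1+\beta)\bm{I}-\alpha\bm{A}^\top\bm{A}\end{bmatrix}$ (heavy-ball iteration matrix) and $\rho_{\mathrm{HB}}^*:=\min_{\alpha>0,\beta\ge0}\rho(\bm{N}(\alpha,\beta))$. *)

theory Defs
  imports "Jordan_Normal_Form.Spectral_Radius" "Jordan_Normal_Form.DL_Rank"
begin

text \<open>Horizontal concatenation [A1 A2] of two matrices with the same number of rows.\<close>
definition hcat :: "real mat \<Rightarrow> real mat \<Rightarrow> real mat" where
  "hcat A1 A2 = four_block_mat A1 A2 (0\<^sub>m 0 (dim_col A1)) (0\<^sub>m 0 (dim_col A2))"

definition cmat :: "real mat \<Rightarrow> complex mat" where
  "cmat M = map_mat complex_of_real M"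

definition BGD_iter :: "real mat \<Rightarrow> real mat \<Rightarrow> real \<Rightarrow> real \<Rightarrow> real mat" where
  "BGD_iter A1 A2 g1 g2 =
    (let n1 = dim_col A1; n2 = dim_col A2; n = n1 + n2 in
     (1\<^sub>m n - four_block_mat (0\<^sub>m n1 n1) (0\<^sub>m n1 n2)
                (g2 \<cdot>\<^sub>m (transpose_mat A2 * A1)) (g2 \<cdot>\<^sub>m (transpose_mat A2 * A2)))
   * (1\<^sub>m n - four_block_mat (g1 \<cdot>\<^sub>m (transpose_mat A1 * A1)) (g1 \<cdot>\<^sub>m (transpose_mat A1 * A2))
                (0\<^sub>m n2 n1) (0\<^sub>m n2 n2)))"

definition HB_iter :: "real mat \<Rightarrow> real \<Rightarrow> real \<Rightarrow> real mat" where
  "HB_iter A \<alpha> \<beta> =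
    (let n = dim_col A in
     four_block_mat (0\<^sub>m n n) (1\<^sub>m n) ((- \<beta>) \<cdot>\<^sub>m 1\<^sub>m n)
       ((1 + \<beta>) \<cdot>\<^sub>m 1\<^sub>m n - \<alpha> \<cdot>\<^sub>m (transpose_mat A * A)))"

text \<open>Optimal rates (the paper's minima, rendered as infima).\<close>
definition rho_BGD_opt :: "real mat \<Rightarrow> real mat \<Rightarrow> real" where
  "rho_BGD_opt A1 A2 =
     Inf {spectral_radius (cmat (BGD_iter A1 A2 g1 g2)) | g1 g2. g1 > 0 \<and> g2 > 0}"

definition rho_HB_opt :: "real mat \<Rightarrow> real" where
  "rho_HB_opt A =
     Inf {spectral_radius (cmat (HB_iter A \<alpha> \<beta>)) | \<alpha> \<beta>. \<alpha> > 0 \<and> \<beta> \<ge> 0}"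

end

theory Submission
  imports Defs
begin


lemma cmat_dim[simp]: "dim_row (cmat A) = dim_row A" "dim_col (cmat A) = dim_col A"
  by (auto simp: cmat_def)

lemma cmat_carrier[simp]: "A \<in> carrier_mat a b \<Longrightarrow> cmat A \<in> carrier_mat a b"
  by (auto simp: cmat_def)

lemma cmat_index[simp]: "i < dim_row A \<Longrightarrow> j < dim_col A \<Longrightarrow> cmat A $$ (i,j) = of_real (A $$ (i,j))"
  by (auto simp: cmat_def)

lemma cmat_mult: assumes "A \<in> carrier_mat a b" "B \<in> carrier_mat b c"
  shows "cmat (A * B) = cmat A * cmat B"
  by (rule eq_matI, insert assms, auto simp: scalar_prod_def)

lemma cmat_add: assumes "A \<in> carrier_mat a b" "B \<in> carrier_mat a b"
  shows "cmat (A + B) = cmat A + cmat B"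
  by (rule eq_matI, insert assms, auto)

lemma cmat_minus: assumes "A \<in> carrier_mat a b" "B \<in> carrier_mat a b"
  shows "cmat (A - B) = cmat A - cmat B"
  by (rule eq_matI, insert assms, auto)

lemma cmat_smult: "cmat (c \<cdot>\<^sub>m A) = of_real c \<cdot>\<^sub>m cmat A"
  by (rule eq_matI, auto)

lemma cmat_one: "cmat (1\<^sub>m n) = 1\<^sub>m n"
  by (rule eq_matI, auto)

lemma cmat_zero: "cmat (0\<^sub>m a b) = 0\<^sub>m a b"
  by (rule eq_matI, auto)

lemma cmat_uminus: "cmat (- A) = - cmat A"
  by (rule eq_matI, auto)

lemma cmat_four_block: assumes c: "A \<in> carrier_mat nr1 nc1" "B \<in> carrier_mat nr1 nc2"
  "C \<in> carrier_mat nr2 nc1" "D \<in> carrier_mat nr2 nc2"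
  shows "cmat (four_block_mat A B C D) = four_block_mat (cmat A) (cmat B) (cmat C) (cmat D)"
  unfolding cmat_def by (rule map_four_block_mat[OF c])

lemma cmat_transpose: "cmat (transpose_mat A) = transpose_mat (cmat A)"
  by (rule eq_matI, auto)

lemma cmat_adj:
  assumes B: "B \<in> carrier_mat p q" and x: "x \<in> carrier_vec q" and y: "y \<in> carrier_vec p"
  shows "(cmat B *\<^sub>v x) \<bullet>c y = x \<bullet>c (cmat (transpose_mat B) *\<^sub>v y)"
proof -
  have "(cmat B *\<^sub>v x) \<bullet>c y = (\<Sum>i<p. (\<Sum>j<q. of_real (B $$ (i,j)) * x $ j) * cnj (y $ i))"
    using B x y by (auto simp: scalar_prod_def row_def lessThan_atLeast0 intro!: sum.cong)
  also have "\<dots> = (\<Sum>i<p. \<Sum>j<q. of_real (B $$ (i,j)) * x $ j * cnj (y $ i))"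
    by (simp add: sum_distrib_right)
  also have "\<dots> = (\<Sum>j<q. \<Sum>i<p. x $ j * (of_real (B $$ (i,j)) * cnj (y $ i)))"
    by (subst sum.swap) (simp add: ac_simps)
  also have "\<dots> = (\<Sum>j<q. x $ j * cnj (\<Sum>i<p. of_real (B $$ (i,j)) * y $ i))"
    by (simp add: sum_distrib_left)
  also have "\<dots> = x \<bullet>c (cmat (transpose_mat B) *\<^sub>v y)"
    using B x y by (auto simp: scalar_prod_def row_def lessThan_atLeast0 intro!: sum.cong)
  finally show ?thesis .
qed

lemma cmat_gram:
  assumes B: "B \<in> carrier_mat p q" and x: "x \<in> carrier_vec q"
  shows "(cmat (transpose_mat B * B) *\<^sub>v x) \<bullet>c x = (cmat B *\<^sub>v x) \<bullet>c (cmat B *\<^sub>v x)"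
proof -
  have "cmat (transpose_mat B * B) *\<^sub>v x = cmat (transpose_mat B) *\<^sub>v (cmat B *\<^sub>v x)"
    using B x by (simp add: cmat_mult[of _ q p _ q] assoc_mult_mat_vec[of _ q p _ q])
  moreover have "(cmat (transpose_mat B) *\<^sub>v (cmat B *\<^sub>v x)) \<bullet>c x = (cmat B *\<^sub>v x) \<bullet>c (cmat B *\<^sub>v x)"
    using cmat_adj[of "transpose_mat B" q p "cmat B *\<^sub>v x" x] B x mult_mat_vec_carrier[OF cmat_carrier[OF B] x] by simp
  ultimately show ?thesis by simp
qed

lemma rayleigh:
  assumes B: "B \<in> carrier_mat p q" and x: "x \<in> carrier_vec q" and nz: "x \<noteq> 0\<^sub>v q"
    and ev: "cmat (transpose_mat B * B) *\<^sub>v x = \<mu> \<cdot>\<^sub>v x"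
  shows "Im \<mu> = 0 \<and> Re \<mu> \<ge> 0"
proof -
  have "\<mu> * (x \<bullet>c x) = (cmat B *\<^sub>v x) \<bullet>c (cmat B *\<^sub>v x)"
    using cmat_gram[OF B x] ev x by simp
  moreover have "(cmat B *\<^sub>v x) \<bullet>c (cmat B *\<^sub>v x) \<ge> 0" by (rule conjugate_square_ge_0_vec)
  moreover have "x \<bullet>c x > 0" using x nz by simp
  ultimately have a: "\<mu> * (x \<bullet>c x) \<ge> 0" "x \<bullet>c x > 0" by auto
  then have "Im (x \<bullet>c x) = 0" "Re (x \<bullet>c x) > 0" "Im (\<mu> * (x \<bullet>c x)) = 0" "Re (\<mu> * (x \<bullet>c x)) \<ge> 0"
    by (auto simp: less_eq_complex_def less_complex_def)
  then show ?thesis by (auto simp: zero_le_mult_iff)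
qed

lemma smult_mat_vec: "dim_vec v = dim_col A \<Longrightarrow> (k \<cdot>\<^sub>m A) *\<^sub>v v = k \<cdot>\<^sub>v (A *\<^sub>v v)"
  by (rule eq_vecI) (auto simp: scalar_prod_def sum_distrib_left ac_simps)

lemma zero_mat_vec: "v \<in> carrier_vec nc \<Longrightarrow> 0\<^sub>m nr nc *\<^sub>v v = 0\<^sub>v nr"
  by (rule eq_vecI) (auto simp: scalar_prod_def)

lemma smult_append: "k \<cdot>\<^sub>v (a @\<^sub>v b) = (k \<cdot>\<^sub>v a) @\<^sub>v (k \<cdot>\<^sub>v b)"
  by (rule eq_vecI) (auto simp: nth_append)

lemma append_zero_iff: "a \<in> carrier_vec n1 \<Longrightarrow> b \<in> carrier_vec n2 \<Longrightarrow>
   (a @\<^sub>v b = 0\<^sub>v (n1+n2)) = (a = 0\<^sub>v n1 \<and> b = 0\<^sub>v n2)"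
proof -
  have "0\<^sub>v (n1+n2) = 0\<^sub>v n1 @\<^sub>v (0\<^sub>v n2 :: 'a :: zero vec)" by (rule eq_vecI) auto
  moreover assume "a \<in> carrier_vec n1" "b \<in> carrier_vec n2"
  ultimately show ?thesis by simp
qed

lemma one_minus_fb: assumes "A \<in> carrier_mat n1 n1" "B \<in> carrier_mat n1 n2" "C \<in> carrier_mat n2 n1" "D \<in> carrier_mat n2 n2"
  shows "1\<^sub>m (n1+n2) - four_block_mat A B C D = four_block_mat (1\<^sub>m n1 - A) (0\<^sub>m n1 n2 - B) (0\<^sub>m n2 n1 - C) (1\<^sub>m n2 - D)"
  by (rule eq_matI, insert assms, auto)

lemma hcat_carrier: "A1 \<in> carrier_mat m n1 \<Longrightarrow> A2 \<in> carrier_mat m n2 \<Longrightarrow> hcat A1 A2 \<in> carrier_mat m (n1+n2)"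
  unfolding hcat_def by (metis add_0_right carrier_matD(2) four_block_carrier_mat zero_carrier_mat)

lemma hcat_gram: assumes A1: "A1 \<in> carrier_mat m n1" and A2: "A2 \<in> carrier_mat m n2"
  shows "transpose_mat (hcat A1 A2) * hcat A1 A2 = four_block_mat (transpose_mat A1 * A1) (transpose_mat A1 * A2) (transpose_mat A2 * A1) (transpose_mat A2 * A2)"
proof -
  have h: "hcat A1 A2 = four_block_mat A1 A2 (0\<^sub>m 0 n1) (0\<^sub>m 0 n2)" using A1 A2 by (simp add: hcat_def)
  have t: "transpose_mat (hcat A1 A2) = four_block_mat (transpose_mat A1) (0\<^sub>m n1 0) (transpose_mat A2) (0\<^sub>m n2 0)"
    unfolding h by (subst transpose_four_block_mat[OF A1 A2]) auto
  show ?thesis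
    apply (subst t) apply (subst h)
    by (subst mult_four_block_mat[of _ n1 m _ 0 _ n2]) (insert A1 A2, auto)
qed



lemma quad_disc_le:
  fixes z :: complex and b c :: real
  assumes eq: "z^2 - of_real b * z + of_real c = 0" and d: "b^2 \<le> 4*c"
  shows "(cmod z)^2 = c"
proof -
  obtain x y where z: "z = Complex x y" by (cases z)
  have re: "x^2 - y^2 - b*x + c = 0" using arg_cong[OF eq, of Re] z
    by (simp add: power2_eq_square)
  have im: "2*x*y - b*y = 0" using arg_cong[OF eq, of Im] z
    by (simp add: power2_eq_square)
  have nz: "(cmod z)^2 = x^2 + y^2" using z by (simp add: cmod_def)
  show ?thesis
  proof (cases "y = 0")
    case True
    then have "x^2 - b*x + c = 0" using re by simp
    then have "(2*x - b)^2 = b^2 - 4*c" by (simp add: power2_eq_square algebra_simps) 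
    then have "(2*x - b)^2 = 0" using d by (smt (verit) zero_le_power2)
    then have "x = b/2" by simp
    then have b2: "b = 2*x" by simp
    have "c = b*x - x^2" using \<open>x^2 - b*x + c = 0\<close> by (simp add: algebra_simps)
    then have "c = x^2" unfolding b2 by (simp add: power2_eq_square)
    then show ?thesis using nz True by simp
  next
    case False
    have "(2*x - b)*y = 0" using im by (simp add: algebra_simps)
    then have "2*x - b = 0" using False by simp
    then have b2: "b = 2*x" by simp
    have "c = y^2 + b*x - x^2" using re by (simp add: algebra_simps)
    then have "c = x^2 + y^2" unfolding b2 by (simp add: power2_eq_square)
    then show ?thesis using nz by simp
  qed
qed

definition zr :: "real \<Rightarrow> real \<Rightarrow> complex" where
  "zr b \<beta> = (if b^2 < 4*\<beta> then Complex (b/2) (sqrt (4*\<beta> - b^2)/2)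
     else if b \<ge> 0 then of_real ((b + sqrt (b^2 - 4*\<beta>))/2) else of_real ((b - sqrt (b^2 - 4*\<beta>))/2))"

lemma zr_root: "(zr b \<beta>)^2 - of_real b * zr b \<beta> + of_real \<beta> = 0"
proof (cases "b^2 < 4*\<beta>")
  case True
  have s: "(sqrt (4*\<beta> - b^2))^2 = 4*\<beta> - b^2" using True by simp
  show ?thesis using True s by (simp add: zr_def complex_eq_iff power2_eq_square field_simps)
next
  case False
  have s: "(sqrt (b^2 - 4*\<beta>))^2 = b^2 - 4*\<beta>" using False by simp
  define d where "d = sqrt (b^2 - 4*\<beta>)"
  have r1: "((b + d)/2)^2 - b*((b+d)/2) + \<beta> = 0" using s by (simp add: d_def power2_eq_square field_simps)
  have r2: "((b - d)/2)^2 - b*((b-d)/2) + \<beta> = 0" using s by (simp add: d_def power2_eq_square field_simps)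
  have c1: "(complex_of_real ((b + d)/2))^2 - of_real b * of_real ((b+d)/2) + of_real \<beta> = 0"
    using arg_cong[OF r1, of complex_of_real] by simp
  have c2: "(complex_of_real ((b - d)/2))^2 - of_real b * of_real ((b-d)/2) + of_real \<beta> = 0"
    using arg_cong[OF r2, of complex_of_real] by simp
  show ?thesis using False c1 c2 by (simp add: zr_def d_def[symmetric])
qed

lemma zr_bound:
  assumes b0: "\<beta> \<ge> 0" and q: "q > 0" and lt: "cmod (zr b \<beta>) < q"
  shows "\<beta> < q^2 \<and> \<bar>b\<bar> * q < q^2 + \<beta>"
proof (cases "b^2 < 4*\<beta>")
  case True
  have s: "(sqrt (4*\<beta> - b^2))^2 = 4*\<beta> - b^2" using True by simp
  have "(cmod (zr b \<beta>))^2 = \<beta>" using True s b0 by (simp add: zr_def cmod_def power2_eq_square field_simps)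
  moreover have "(cmod (zr b \<beta>))^2 < q^2" using lt by (intro power_strict_mono) auto
  ultimately have bq: "\<beta> < q^2" by simp
  have "sqrt (b^2) < sqrt (4*\<beta>)" using True by (rule real_sqrt_less_mono)
  then have bl: "\<bar>b\<bar> < 2 * sqrt \<beta>" by (simp add: real_sqrt_mult)
  have sb: "(sqrt \<beta>)^2 = \<beta>" using b0 by simp
  have "0 \<le> (q - sqrt \<beta>)^2" by simp
  then have l2: "2 * sqrt \<beta> * q \<le> q^2 + \<beta>" using sb by (simp add: power2_eq_square algebra_simps)
  have "\<bar>b\<bar> * q < 2 * sqrt \<beta> * q" using bl q by simp
  then show ?thesis using bq l2 by linarith
next
  case False
  define d where "d = sqrt (b^2 - 4*\<beta>)"
  have s: "d^2 = b^2 - 4*\<beta>" "d \<ge> 0" using False by (auto simp: d_def)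
  have "d^2 \<le> \<bar>b\<bar>^2" using s b0 by simp
  then have dle: "d \<le> \<bar>b\<bar>" by (rule power2_le_imp_le) simp
  define z1 where "z1 = (\<bar>b\<bar> + d)/2"
  define z2 where "z2 = (\<bar>b\<bar> - d)/2"
  have "zr b \<beta> = of_real (if b \<ge> 0 then (b+d)/2 else (b-d)/2)" using False by (simp add: zr_def d_def)
  then have "cmod (zr b \<beta>) = \<bar>if b \<ge> 0 then (b+d)/2 else (b-d)/2\<bar>" by (simp only: norm_of_real)
  also have "\<dots> = z1" using s dle by (auto simp: z1_def)
  finally have "cmod (zr b \<beta>) = z1" .
  then have z1q: "z1 < q" using lt by simp
  have z2: "0 \<le> z2" "z2 \<le> z1" using dle s by (auto simp: z1_def z2_def)
  have prod: "z1 * z2 = \<beta>" using s by (simp add: z1_def z2_def power2_eq_square field_simps)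
  have sum: "z1 + z2 = \<bar>b\<bar>" by (simp add: z1_def z2_def field_simps)
  have "z1*z2 \<le> z1*z1" using z2 by (intro mult_left_mono) auto
  moreover have "z1^2 < q^2" using z1q z2 by (intro power_strict_mono) auto
  ultimately have bq: "\<beta> < q^2" using prod by (simp add: power2_eq_square)
  have "(q - z1) * (q - z2) > 0" using z1q z2 by simp
  moreover have "(q - z1)*(q - z2) = q^2 - (z1+z2)*q + z1*z2" by (simp add: power2_eq_square algebra_simps)
  ultimately have "q^2 - \<bar>b\<bar>*q + \<beta> > 0" using sum prod by simp
  then show ?thesis using bq by (simp add: algebra_simps)
qed

lemma hb_real:
  assumes q: "q > 0" "q \<le> 1" and mu: "\<mu> \<ge> 0" and L: "L > 0"
    and rel: "\<mu> * (1+q)^2 = L * (1-q)^2" and a: "\<alpha> > 0" and b: "\<beta> \<ge> 0"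
  shows "\<not> (cmod (zr (1+\<beta>-\<alpha>*\<mu>) \<beta>) < q \<and> cmod (zr (1+\<beta>-\<alpha>*L) \<beta>) < q)"
proof
  assume h: "cmod (zr (1+\<beta>-\<alpha>*\<mu>) \<beta>) < q \<and> cmod (zr (1+\<beta>-\<alpha>*L) \<beta>) < q"
  from zr_bound[OF b q(1)] h have
    b1: "\<beta> < q^2" and h1: "\<bar>1+\<beta>-\<alpha>*\<mu>\<bar> * q < q^2 + \<beta>" and h2: "\<bar>1+\<beta>-\<alpha>*L\<bar> * q < q^2 + \<beta>"
    by blast+
  have "(1+\<beta>-\<alpha>*\<mu>)*q \<le> \<bar>1+\<beta>-\<alpha>*\<mu>\<bar>*q" using q by (intro mult_right_mono) auto
  then have "q + \<beta>*q - \<alpha>*\<mu>*q < q*q + \<beta>" using h1 by (simp add: algebra_simps power2_eq_square)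
  then have e1: "\<alpha>*\<mu>*q > (1-q)*(q-\<beta>)" by (simp add: algebra_simps)
  have "-(1+\<beta>-\<alpha>*L)*q \<le> \<bar>1+\<beta>-\<alpha>*L\<bar>*q" using q by (intro mult_right_mono) auto
  then have "\<alpha>*L*q - q - \<beta>*q < q*q + \<beta>" using h2 by (simp add: algebra_simps power2_eq_square)
  then have e2: "\<alpha>*L*q < (1+q)*(q+\<beta>)" by (simp add: algebra_simps)
  have "L*((1-q)*(q-\<beta>)) < L*(\<alpha>*\<mu>*q)" using e1 L by simp
  also have "\<dots> = \<mu>*(\<alpha>*L*q)" by simp
  also have "\<dots> \<le> \<mu>*((1+q)*(q+\<beta>))" using e2 mu by (simp add: mult_left_mono)
  finally have f: "L*((1-q)*(q-\<beta>)) < \<mu>*((1+q)*(q+\<beta>))" .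
  have "L*(1-q)^2*q \<le> L*((1-q)*(q-\<beta>))"
  proof -
    have "(1-q)*(q*(1-q)) \<le> (1-q)*(q-\<beta>)" using q b1 by (intro mult_left_mono) (auto simp: power2_eq_square algebra_simps)
    from mult_left_mono[OF this, of L] L show ?thesis by (simp add: power2_eq_square algebra_simps)
  qed
  moreover have "\<mu>*((1+q)*(q+\<beta>)) \<le> \<mu>*(1+q)^2*q"
  proof -
    have "(1+q)*(q+\<beta>) \<le> (1+q)*(q*(1+q))" using q b1 by (intro mult_left_mono) (auto simp: power2_eq_square algebra_simps)
    from mult_left_mono[OF this mu] show ?thesis by (simp add: power2_eq_square algebra_simps)
  qed
  moreover have "\<mu>*(1+q)^2*q = L*(1-q)^2*q" using rel by simp
  ultimately show False using f by linarith
qed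



lemma aux1: "(u::real) \<noteq> 0 \<Longrightarrow> 4/(u*u)*((2-u)*u) = 4*(2-u)/u"
  by (simp add: field_simps)

lemma real_facts:
  fixes S s :: real
  assumes S0: "S \<ge> 0" and sdef: "s = sqrt S" and s1: "s \<le> 1"
  defines "a \<equiv> sqrt (1+s)" and "b \<equiv> sqrt (1-s)"
  defines "t \<equiv> a*b"
  defines "q \<equiv> (a-b)/(a+b)" and "g \<equiv> 2/(1+t)"
  shows "g \<ge> 1" "g^2 * S \<le> 4*(g-1)" "g - 1 = q^2" "q \<ge> 0" "q \<le> 1"
    "s = 0 \<Longrightarrow> q = 0" "s > 0 \<Longrightarrow> q > 0" "(1-s) * (1+q)^2 = (1+s) * (1-q)^2"
proof -
  have s0: "s \<ge> 0" and Ss: "S = s^2" using S0 sdef by auto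
  have a2: "a^2 = 1+s" using s0 unfolding a_def by simp
  have b2: "b^2 = 1-s" unfolding b_def by (rule real_sqrt_pow2) (use s1 in simp)
  have a1: "a \<ge> 1" using s0 by (simp add: a_def)
  have b0: "b \<ge> 0" using s1 by (simp add: b_def)
  have ba: "b \<le> a" using s0 by (simp add: a_def b_def)
  have ab0: "a + b > 0" using a1 b0 by simp
  have t0: "t \<ge> 0" using a1 b0 by (simp add: t_def)
  have "t^2 = a^2 * b^2" by (simp add: t_def power_mult_distrib)
  also have "\<dots> = 1 - S" unfolding a2 b2 Ss by (simp add: power2_eq_square algebra_simps)
  finally have t2: "t^2 = 1 - S" .
  have "t^2 \<le> 1^2" using t2 S0 by simp
  then have t1: "t \<le> 1" by (rule power2_le_imp_le) simp
  show "g \<ge> 1" using t0 t1 by (simp add: g_def field_simps)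
  have SS: "S = (1-t)*(1+t)" using t2 by (simp add: power2_eq_square algebra_simps)
  have gm: "g - 1 = (1-t)/(1+t)" using t0 by (simp add: g_def field_simps)
  have "g^2 * S = (4/((1+t)*(1+t))) * ((1-t)*(1+t))" unfolding SS g_def by (simp add: power2_eq_square)
  also have "\<dots> = 4*(1-t)/(1+t)"
  proof -
    have tp: "1 + t \<noteq> 0" using t0 by simp
    have "1 - t = 2 - (1+t)" by simp
    then show ?thesis using aux1[OF tp] by simp
  qed
  finally have "g^2 * S = 4*(1-t)/(1+t)" .
  then show "g^2 * S \<le> 4*(g-1)" unfolding gm by simp
  have e1: "(a-b)^2 = 2 - 2*t" using a2 b2 by (simp add: t_def power2_eq_square algebra_simps)
  have e2: "(a+b)^2 = 2 + 2*t" using a2 b2 by (simp add: t_def power2_eq_square algebra_simps)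
  have "q^2 = (a-b)^2/(a+b)^2" by (simp add: q_def power_divide)
  also have "\<dots> = (1-t)/(1+t)"
  proof -
    have "2 - 2*t = 2*(1-t)" "2 + 2*t = 2*(1+t)" by simp_all
    then show ?thesis unfolding e1 e2 by (simp only: mult_divide_mult_cancel_left_if) simp
  qed
  finally show "g - 1 = q^2" using gm by simp
  show "q \<ge> 0" using ab0 ba by (simp add: q_def)
  show "q \<le> 1" using ab0 b0 by (simp add: q_def)
  show "s = 0 \<Longrightarrow> q = 0" by (simp add: q_def a_def b_def)
  show "s > 0 \<Longrightarrow> q > 0"
  proof -
    assume "s > 0"
    then have "b < a" by (simp add: a_def b_def)
    then show "q > 0" using ab0 by (simp add: q_def)
  qed
  have q1: "1 + q = 2*a/(a+b)" and q2: "1 - q = 2*b/(a+b)" using ab0 by (simp_all add: q_def field_simps)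
  have "(1-s) * (1+q)^2 = b^2 * (4*a^2) / (a+b)^2" unfolding q1 b2[symmetric] by (simp add: power_divide power_mult_distrib)
  also have "\<dots> = a^2 * (4*b^2) / (a+b)^2" by simp
  also have "\<dots> = (1+s) * (1-q)^2" unfolding q2 a2[symmetric] by (simp add: power_divide power_mult_distrib)
  finally show "(1-s) * (1+q)^2 = (1+s) * (1-q)^2" .
qed




lemma sr_le: assumes A: "A \<in> carrier_mat n n" and n: "n > 0"
  and h: "\<And>z v. eigenvector A v z \<Longrightarrow> cmod z \<le> r"
  shows "spectral_radius A \<le> r"
proof -
  from spectral_radius_mem_max(1)[OF A n] obtain z where "z \<in> spectrum A" "spectral_radius A = cmod z" by auto
  then show ?thesis using h by (auto simp: spectrum_def eigenvalue_def)
qed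

lemma sr_ge: assumes A: "A \<in> carrier_mat n n" and n: "n > 0"
  and h: "eigenvector A v z"
  shows "cmod z \<le> spectral_radius A"
proof -
  have "z \<in> spectrum A" using h by (auto simp: spectrum_def eigenvalue_def)
  then show ?thesis by (intro spectral_radius_mem_max(2)[OF A n]) auto
qed

lemma sr_nonneg: assumes A: "A \<in> carrier_mat n n" and n: "n > 0"
  shows "0 \<le> spectral_radius A"
proof -
  from spectral_radius_mem_max(1)[OF A n] obtain z where "spectral_radius A = cmod z" by auto
  then show ?thesis by simp
qed

lemma bgd_eig:
  fixes Cc CTc :: "complex mat" and g S :: real
  assumes Cc: "Cc \<in> carrier_mat n2 n1" and CTc: "CTc \<in> carrier_mat n1 n2"
    and x: "x \<in> carrier_vec (n1+n2)" and xnz: "x \<noteq> 0\<^sub>v (n1+n2)"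
    and ev: "(four_block_mat (1\<^sub>m n1) (0\<^sub>m n1 n2) (of_real (-g) \<cdot>\<^sub>m Cc) (of_real (1-g) \<cdot>\<^sub>m 1\<^sub>m n2)
        * four_block_mat (of_real (1-g) \<cdot>\<^sub>m 1\<^sub>m n1) (of_real (-g) \<cdot>\<^sub>m CTc) (0\<^sub>m n2 n1) (1\<^sub>m n2)) *\<^sub>v x = z \<cdot>\<^sub>v x"
    and g1: "g \<ge> 1"
    and hK: "\<And>v \<mu>. v \<in> carrier_vec n1 \<Longrightarrow> v \<noteq> 0\<^sub>v n1 \<Longrightarrow> CTc *\<^sub>v (Cc *\<^sub>v v) = \<mu> \<cdot>\<^sub>v v \<Longrightarrow> Im \<mu> = 0 \<and> 0 \<le> Re \<mu> \<and> Re \<mu> \<le> S"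
    and hg: "g^2 * S \<le> 4*(g-1)"
  shows "cmod z \<le> g - 1"
proof -
  define gc where "gc = complex_of_real g"
  define x1 where "x1 = vec_first x n1"
  define x2 where "x2 = vec_last x n2"
  have x1c: "x1 \<in> carrier_vec n1" and x2c: "x2 \<in> carrier_vec n2" by (auto simp: x1_def x2_def)
  have xs: "x = x1 @\<^sub>v x2" using x by (simp add: x1_def x2_def)
  define y1 where "y1 = of_real (1-g) \<cdot>\<^sub>v x1 + of_real (-g) \<cdot>\<^sub>v (CTc *\<^sub>v x2)"
  have y1c: "y1 \<in> carrier_vec n1" using CTc x1c x2c by (simp add: y1_def)
  have R: "four_block_mat (of_real (1-g) \<cdot>\<^sub>m 1\<^sub>m n1) (of_real (-g) \<cdot>\<^sub>m CTc) (0\<^sub>m n2 n1) (1\<^sub>m n2) *\<^sub>v (x1 @\<^sub>v x2)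
      = y1 @\<^sub>v x2"
    by (subst four_block_mat_mult_vec[of _ n1 n1 _ n2 _ n2]) 
       (insert CTc x1c x2c, auto simp: smult_mat_vec zero_mat_vec y1_def)
  have L: "four_block_mat (1\<^sub>m n1) (0\<^sub>m n1 n2) (of_real (-g) \<cdot>\<^sub>m Cc) (of_real (1-g) \<cdot>\<^sub>m 1\<^sub>m n2) *\<^sub>v (y1 @\<^sub>v x2)
      = y1 @\<^sub>v (of_real (-g) \<cdot>\<^sub>v (Cc *\<^sub>v y1) + of_real (1-g) \<cdot>\<^sub>v x2)"
    by (subst four_block_mat_mult_vec[of _ n1 n1 _ n2 _ n2]) 
       (insert Cc y1c x2c, auto simp: smult_mat_vec zero_mat_vec)
  have "y1 @\<^sub>v (of_real (-g) \<cdot>\<^sub>v (Cc *\<^sub>v y1) + of_real (1-g) \<cdot>\<^sub>v x2) = (z \<cdot>\<^sub>v x1) @\<^sub>v (z \<cdot>\<^sub>v x2)"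
  proof -
    have "(z \<cdot>\<^sub>v x1) @\<^sub>v (z \<cdot>\<^sub>v x2) = z \<cdot>\<^sub>v x" unfolding xs by (simp add: smult_append)
    also have "\<dots> = four_block_mat (1\<^sub>m n1) (0\<^sub>m n1 n2) (of_real (-g) \<cdot>\<^sub>m Cc) (of_real (1-g) \<cdot>\<^sub>m 1\<^sub>m n2) *\<^sub>v
       (four_block_mat (of_real (1-g) \<cdot>\<^sub>m 1\<^sub>m n1) (of_real (-g) \<cdot>\<^sub>m CTc) (0\<^sub>m n2 n1) (1\<^sub>m n2) *\<^sub>v x)"
      unfolding ev[symmetric] by (rule assoc_mult_mat_vec[of _ "n1+n2" "n1+n2" _ "n1+n2"]) (insert Cc CTc x, auto)
    also have "\<dots> = y1 @\<^sub>v (of_real (-g) \<cdot>\<^sub>v (Cc *\<^sub>v y1) + of_real (1-g) \<cdot>\<^sub>v x2)"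
      unfolding xs R L ..
    finally show ?thesis by simp
  qed
  then have E1: "y1 = z \<cdot>\<^sub>v x1" and E2: "of_real (-g) \<cdot>\<^sub>v (Cc *\<^sub>v y1) + of_real (1-g) \<cdot>\<^sub>v x2 = z \<cdot>\<^sub>v x2"
    using y1c x1c by (auto simp del: append_vec_eq simp add: append_vec_eq[of _ n1])
  have Cy: "Cc *\<^sub>v y1 = z \<cdot>\<^sub>v (Cc *\<^sub>v x1)" unfolding E1 using Cc x1c by (simp add: mult_mat_vec)
  have E1i: "z * x1$i = (1-gc)*x1$i - gc*(CTc *\<^sub>v x2)$i" if "i < n1" for i
    using arg_cong[OF E1, of "\<lambda>v. v $ i"] that CTc x1c x2c by (simp add: y1_def gc_def)
  have E2i: "z * x2$i = (1-gc)*x2$i - gc*z*(Cc *\<^sub>v x1)$i" if "i < n2" for i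
    using arg_cong[OF E2, of "\<lambda>v. v $ i"] that Cc x1c x2c by (simp add: Cy gc_def mult.assoc)
  show ?thesis
  proof (cases "x1 = 0\<^sub>v n1")
    case True
    then have "x2 \<noteq> 0\<^sub>v n2" using xnz xs append_zero_iff[OF x1c x2c] by auto
    then obtain i where i: "i < n2" "x2 $ i \<noteq> 0" using x2c by (metis eq_vecI carrier_vecD index_zero_vec(1,2))
    have "Cc *\<^sub>v x1 = 0\<^sub>v n2" using True Cc by (intro eq_vecI) (auto simp: scalar_prod_def)
    then have "z * x2$i = (1-gc)*x2$i" using E2i[OF i(1)] i by simp
    then have "z = 1 - gc" using i by simp
    then have "z = of_real (1-g)" by (simp add: gc_def)
    then have "cmod z = \<bar>1-g\<bar>" by (simp only: norm_of_real)
    then show ?thesis using g1 by simp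
  next
    case x1nz: False
    show ?thesis
    proof (cases "z = 0")
      case True then show ?thesis using g1 by simp
    next
      case znz: False
      have gnz: "gc \<noteq> 0" using g1 by (simp add: gc_def)
      have V2: "(gc*z) \<cdot>\<^sub>v (Cc *\<^sub>v x1) = (1-gc-z) \<cdot>\<^sub>v x2"
        by (rule eq_vecI) (insert E2i Cc x2c, auto simp: algebra_simps)
      have "CTc *\<^sub>v ((gc*z) \<cdot>\<^sub>v (Cc *\<^sub>v x1)) = CTc *\<^sub>v ((1-gc-z) \<cdot>\<^sub>v x2)" by (simp add: V2)
      then have V3: "(gc*z) \<cdot>\<^sub>v (CTc *\<^sub>v (Cc *\<^sub>v x1)) = (1-gc-z) \<cdot>\<^sub>v (CTc *\<^sub>v x2)"
        using CTc Cc x1c x2c by (simp add: mult_mat_vec[of _ n1 n2])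
      define \<mu> where "\<mu> = (1-gc-z)^2 / (gc^2 * z)"
      have W: "CTc *\<^sub>v (Cc *\<^sub>v x1) = \<mu> \<cdot>\<^sub>v x1"
      proof (rule eq_vecI)
        fix i assume "i < dim_vec (\<mu> \<cdot>\<^sub>v x1)"
        then have i: "i < n1" using x1c by simp
        have a: "gc*z*(CTc *\<^sub>v (Cc *\<^sub>v x1))$i = (1-gc-z)*(CTc *\<^sub>v x2)$i"
          using arg_cong[OF V3, of "\<lambda>v. v $ i"] i CTc by simp
        have b: "gc*(CTc *\<^sub>v x2)$i = (1-gc-z)*x1$i" using E1i[OF i] by (simp add: algebra_simps)
        have "gc^2*z*(CTc *\<^sub>v (Cc *\<^sub>v x1))$i = (1-gc-z)^2 * x1$i"
        proof -
          have "gc^2*z*(CTc *\<^sub>v (Cc *\<^sub>v x1))$i = gc*(gc*z*(CTc *\<^sub>v (Cc *\<^sub>v x1))$i)" by (simp add: power2_eq_square)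
          also have "\<dots> = (1-gc-z)*(gc*(CTc *\<^sub>v x2)$i)" unfolding a by simp
          also have "\<dots> = (1-gc-z)^2 * x1$i" unfolding b by (simp add: power2_eq_square)
          finally show ?thesis .
        qed
        then show "(CTc *\<^sub>v (Cc *\<^sub>v x1)) $ i = (\<mu> \<cdot>\<^sub>v x1) $ i"
          using i x1c gnz znz by (simp add: \<mu>_def field_simps)
      qed (insert CTc x1c, auto)
      from hK[OF x1c x1nz W] have mu: "Im \<mu> = 0" "0 \<le> Re \<mu>" "Re \<mu> \<le> S" by auto
      define m where "m = Re \<mu>"
      have mum: "\<mu> = of_real m" using mu(1) by (simp add: m_def complex_eq_iff)
      have "(1-gc-z)^2 = gc^2 * z * \<mu>" using gnz znz by (simp add: \<mu>_def)
      then have "z^2 - of_real (2*(1-g) + g^2*m) * z + of_real ((1-g)^2) = 0"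
        unfolding mum gc_def by (simp add: power2_eq_square algebra_simps)
      moreover have "(2*(1-g) + g^2*m)^2 \<le> 4*(1-g)^2"
      proof -
        have "g^2*m \<le> g^2*S" using mu(3) by (simp add: m_def mult_left_mono)
        then have "0 \<le> g^2*m" "g^2*m \<le> 4*(g-1)" using mu(2) hg by (auto simp: m_def)
        then have "\<bar>2*(1-g) + g^2*m\<bar> \<le> 2*(g-1)" using g1 by (simp add: abs_le_iff)
        then have "\<bar>2*(1-g) + g^2*m\<bar>^2 \<le> (2*(g-1))^2" by (rule power_mono) simp
        then show ?thesis by (simp add: power2_eq_square algebra_simps)
      qed
      ultimately have "(cmod z)^2 = (1-g)^2" by (rule quad_disc_le)
      also have "\<dots> = (g-1)^2" by (simp add: power2_eq_square algebra_simps)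
      finally have "cmod z = g - 1" using g1 by (simp add: power2_eq_iff_nonneg)
      then show ?thesis by simp
    qed
  qed
qed



lemma hb_eig:
  fixes G :: "complex mat"
  assumes G: "G \<in> carrier_mat nn nn" and v: "v \<in> carrier_vec nn" and vnz: "v \<noteq> 0\<^sub>v nn"
    and Gv: "G *\<^sub>v v = of_real l \<cdot>\<^sub>v v"
    and z: "z^2 - of_real (1+\<beta>-\<alpha>*l) * z + of_real \<beta> = 0"
  shows "eigenvector (four_block_mat (0\<^sub>m nn nn) (1\<^sub>m nn) (of_real (-\<beta>) \<cdot>\<^sub>m 1\<^sub>m nn)
           (of_real (1+\<beta>) \<cdot>\<^sub>m 1\<^sub>m nn - of_real \<alpha> \<cdot>\<^sub>m G)) (v @\<^sub>v (z \<cdot>\<^sub>v v)) z"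
proof -
  let ?N = "four_block_mat (0\<^sub>m nn nn) (1\<^sub>m nn) (of_real (-\<beta>) \<cdot>\<^sub>m 1\<^sub>m nn)
           (of_real (1+\<beta>) \<cdot>\<^sub>m 1\<^sub>m nn - of_real \<alpha> \<cdot>\<^sub>m G)"
  have zz: "z^2 = of_real (1+\<beta>-\<alpha>*l) * z - of_real \<beta>" using z by (simp add: algebra_simps)
  have "?N *\<^sub>v (v @\<^sub>v (z \<cdot>\<^sub>v v)) = (0\<^sub>m nn nn *\<^sub>v v + 1\<^sub>m nn *\<^sub>v (z \<cdot>\<^sub>v v)) @\<^sub>v
     ((of_real (-\<beta>) \<cdot>\<^sub>m 1\<^sub>m nn) *\<^sub>v v + (of_real (1+\<beta>) \<cdot>\<^sub>m 1\<^sub>m nn - of_real \<alpha> \<cdot>\<^sub>m G) *\<^sub>v (z \<cdot>\<^sub>v v))"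
    by (rule four_block_mat_mult_vec) (insert G v, auto)
  also have "(0\<^sub>m nn nn *\<^sub>v v + 1\<^sub>m nn *\<^sub>v (z \<cdot>\<^sub>v v)) = z \<cdot>\<^sub>v v"
    by (rule eq_vecI) (insert v, auto simp: scalar_prod_def)
  also have "((of_real (-\<beta>) \<cdot>\<^sub>m 1\<^sub>m nn) *\<^sub>v v + (of_real (1+\<beta>) \<cdot>\<^sub>m 1\<^sub>m nn - of_real \<alpha> \<cdot>\<^sub>m G) *\<^sub>v (z \<cdot>\<^sub>v v))
     = z \<cdot>\<^sub>v (z \<cdot>\<^sub>v v)"
  proof -
    have "(of_real (1+\<beta>) \<cdot>\<^sub>m 1\<^sub>m nn - of_real \<alpha> \<cdot>\<^sub>m G) *\<^sub>v (z \<cdot>\<^sub>v v)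
        = (of_real (1+\<beta>) \<cdot>\<^sub>m 1\<^sub>m nn) *\<^sub>v (z \<cdot>\<^sub>v v) - (of_real \<alpha> \<cdot>\<^sub>m G) *\<^sub>v (z \<cdot>\<^sub>v v)"
      by (rule minus_mult_distrib_mat_vec) (insert G v, auto)
    also have "(of_real \<alpha> \<cdot>\<^sub>m G) *\<^sub>v (z \<cdot>\<^sub>v v) = (of_real \<alpha> * z * of_real l) \<cdot>\<^sub>v v"
      using G v by (simp add: smult_mat_vec mult_mat_vec[of _ nn nn] Gv smult_smult_assoc ac_simps)
    finally have e: "(of_real (1+\<beta>) \<cdot>\<^sub>m 1\<^sub>m nn - of_real \<alpha> \<cdot>\<^sub>m G) *\<^sub>v (z \<cdot>\<^sub>v v)
        = (of_real (1+\<beta>) \<cdot>\<^sub>m 1\<^sub>m nn) *\<^sub>v (z \<cdot>\<^sub>v v) - (of_real \<alpha> * z * of_real l) \<cdot>\<^sub>v v" .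
    show ?thesis unfolding e
    proof (rule eq_vecI)
      fix i assume "i < dim_vec (z \<cdot>\<^sub>v (z \<cdot>\<^sub>v v))"
      then have i: "i < nn" using v by simp
      show "((of_real (-\<beta>) \<cdot>\<^sub>m 1\<^sub>m nn) *\<^sub>v v + ((of_real (1+\<beta>) \<cdot>\<^sub>m 1\<^sub>m nn) *\<^sub>v (z \<cdot>\<^sub>v v) - (of_real \<alpha> * z * of_real l) \<cdot>\<^sub>v v)) $ i
          = (z \<cdot>\<^sub>v (z \<cdot>\<^sub>v v)) $ i" (is "?l = ?r")
      proof -
        have z': "z^2 - (1 + of_real \<beta> - of_real \<alpha> * of_real l) * z + of_real \<beta> = 0" using z by simp
        have zz': "z^2 = (1 + of_real \<beta> - of_real \<alpha> * of_real l) * z - of_real \<beta>" using z' by (simp add: algebra_simps)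
        have "?r = z^2 * v$i" using i v by (simp add: power2_eq_square)
        also have "\<dots> = ((1 + of_real \<beta> - of_real \<alpha> * of_real l) * z - of_real \<beta>) * v$i" using zz' by simp
        also have "\<dots> = ?l" using i v by (simp add: smult_mat_vec algebra_simps)
        finally show "?l = ?r" by simp
      qed
    qed (insert v, auto simp: smult_mat_vec)
  qed
  finally have act: "?N *\<^sub>v (v @\<^sub>v (z \<cdot>\<^sub>v v)) = z \<cdot>\<^sub>v (v @\<^sub>v (z \<cdot>\<^sub>v v))" by (simp add: smult_append)
  have "v @\<^sub>v (z \<cdot>\<^sub>v v) \<noteq> 0\<^sub>v (nn+nn)" using append_zero_iff[of v nn "z \<cdot>\<^sub>v v" nn] v vnz by auto
  moreover have "v @\<^sub>v (z \<cdot>\<^sub>v v) \<in> carrier_vec (nn+nn)" using v by auto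
  ultimately show ?thesis unfolding eigenvector_def using act G by auto
qed

lemma G_eig:
  fixes Cc CTc :: "complex mat"
  assumes Cc: "Cc \<in> carrier_mat n2 n1" and CTc: "CTc \<in> carrier_mat n1 n2"
    and u: "u \<in> carrier_vec n1" and unz: "u \<noteq> 0\<^sub>v n1"
    and Ku: "CTc *\<^sub>v (Cc *\<^sub>v u) = of_real (s^2) \<cdot>\<^sub>v u" and s: "s > 0" and sg: "\<sigma>^2 = 1"
  defines "w \<equiv> u @\<^sub>v (of_real (\<sigma>/s) \<cdot>\<^sub>v (Cc *\<^sub>v u))"
  shows "four_block_mat (1\<^sub>m n1) CTc Cc (1\<^sub>m n2) *\<^sub>v w = of_real (1+\<sigma>*s) \<cdot>\<^sub>v w"
    "w \<in> carrier_vec (n1+n2)" "w \<noteq> 0\<^sub>v (n1+n2)"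
proof -
  have wc: "of_real (\<sigma>/s) \<cdot>\<^sub>v (Cc *\<^sub>v u) \<in> carrier_vec n2" using Cc u by simp
  show "w \<in> carrier_vec (n1+n2)" unfolding w_def using wc u by simp
  show "w \<noteq> 0\<^sub>v (n1+n2)" unfolding w_def using append_zero_iff[OF u wc] unz by auto
  have "four_block_mat (1\<^sub>m n1) CTc Cc (1\<^sub>m n2) *\<^sub>v w =
     (1\<^sub>m n1 *\<^sub>v u + CTc *\<^sub>v (of_real (\<sigma>/s) \<cdot>\<^sub>v (Cc *\<^sub>v u))) @\<^sub>v (Cc *\<^sub>v u + 1\<^sub>m n2 *\<^sub>v (of_real (\<sigma>/s) \<cdot>\<^sub>v (Cc *\<^sub>v u)))"
    unfolding w_def by (rule four_block_mat_mult_vec) (insert Cc CTc u wc, auto)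
  also have "CTc *\<^sub>v (of_real (\<sigma>/s) \<cdot>\<^sub>v (Cc *\<^sub>v u)) = of_real (\<sigma>/s) \<cdot>\<^sub>v (of_real (s^2) \<cdot>\<^sub>v u)"
    using Cc CTc u by (simp add: mult_mat_vec[of _ n1 n2] Ku)
  also have "1\<^sub>m n1 *\<^sub>v u + of_real (\<sigma>/s) \<cdot>\<^sub>v (of_real (s^2) \<cdot>\<^sub>v u) = of_real (1+\<sigma>*s) \<cdot>\<^sub>v u"
    by (rule eq_vecI) (insert u s, auto simp: power2_eq_square field_simps)
  also have "Cc *\<^sub>v u + 1\<^sub>m n2 *\<^sub>v (of_real (\<sigma>/s) \<cdot>\<^sub>v (Cc *\<^sub>v u)) = of_real (1+\<sigma>*s) \<cdot>\<^sub>v (of_real (\<sigma>/s) \<cdot>\<^sub>v (Cc *\<^sub>v u))"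
  proof -
    have sc: "(1 + \<sigma> / s) = (1+\<sigma>*s) * (\<sigma>/s)"
      using s sg by (simp add: power2_eq_square field_simps)
    have "Cc *\<^sub>v u + 1\<^sub>m n2 *\<^sub>v (of_real (\<sigma>/s) \<cdot>\<^sub>v (Cc *\<^sub>v u)) = of_real (1 + \<sigma>/s) \<cdot>\<^sub>v (Cc *\<^sub>v u)"
      by (intro eq_vecI) (insert Cc u, auto simp: algebra_simps)
    also have "\<dots> = of_real (1+\<sigma>*s) \<cdot>\<^sub>v (of_real (\<sigma>/s) \<cdot>\<^sub>v (Cc *\<^sub>v u))"
      unfolding smult_smult_assoc sc by simp
    finally show ?thesis .
  qed
  finally show "four_block_mat (1\<^sub>m n1) CTc Cc (1\<^sub>m n2) *\<^sub>v w = of_real (1+\<sigma>*s) \<cdot>\<^sub>v w"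
    unfolding w_def by (simp add: smult_append)
qed



lemma bgd_carrier: assumes "A1 \<in> carrier_mat m n1" "A2 \<in> carrier_mat m n2"
  shows "cmat (BGD_iter A1 A2 g1 g2) \<in> carrier_mat (n1+n2) (n1+n2)"
proof -
  have d: "dim_col A1 = n1" "dim_col A2 = n2" using assms by auto
  have c1: "four_block_mat (0\<^sub>m n1 n1) (0\<^sub>m n1 n2) (g2 \<cdot>\<^sub>m (transpose_mat A2 * A1)) (g2 \<cdot>\<^sub>m (transpose_mat A2 * A2)) \<in> carrier_mat (n1+n2) (n1+n2)"
    by (rule four_block_carrier_mat) (use assms in auto)
  have c2: "four_block_mat (g1 \<cdot>\<^sub>m (transpose_mat A1 * A1)) (g1 \<cdot>\<^sub>m (transpose_mat A1 * A2)) (0\<^sub>m n2 n1) (0\<^sub>m n2 n2) \<in> carrier_mat (n1+n2) (n1+n2)"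
    by (rule four_block_carrier_mat) (use assms in auto)
  show ?thesis unfolding BGD_iter_def Let_def d
    by (intro cmat_carrier mult_carrier_mat[of _ _ "n1+n2"] minus_carrier_mat c1 c2)
qed

lemma hb_carrier: assumes "A \<in> carrier_mat m nn"
  shows "cmat (HB_iter A \<alpha> \<beta>) \<in> carrier_mat (nn+nn) (nn+nn)"
proof -
  have d: "dim_col A = nn" using assms by auto
  show ?thesis unfolding HB_iter_def Let_def d
    by (intro cmat_carrier four_block_carrier_mat) (use assms in \<open>auto intro!: minus_carrier_mat\<close>)
qed

lemma cm1: "cmat (1\<^sub>m n - 0\<^sub>m n n) = 1\<^sub>m n" by (rule eq_matI) auto
lemma cm2: "cmat (0\<^sub>m a b - 0\<^sub>m a b) = 0\<^sub>m a b" by (rule eq_matI) auto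
lemma cm3: "X \<in> carrier_mat a b \<Longrightarrow> cmat (0\<^sub>m a b - g \<cdot>\<^sub>m X) = of_real (-g) \<cdot>\<^sub>m cmat X" by (rule eq_matI) auto
lemma cm4: "cmat (1\<^sub>m n - g \<cdot>\<^sub>m 1\<^sub>m n) = of_real (1-g) \<cdot>\<^sub>m 1\<^sub>m n" by (rule eq_matI) auto

lemma bgd_form:
  assumes A1: "A1 \<in> carrier_mat m n1" and A2: "A2 \<in> carrier_mat m n2"
    and o1: "transpose_mat A1 * A1 = 1\<^sub>m n1" and o2: "transpose_mat A2 * A2 = 1\<^sub>m n2"
  shows "cmat (BGD_iter A1 A2 g g) = four_block_mat (1\<^sub>m n1) (0\<^sub>m n1 n2) (of_real (-g) \<cdot>\<^sub>m cmat (transpose_mat A2 * A1)) (of_real (1-g) \<cdot>\<^sub>m 1\<^sub>m n2)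
      * four_block_mat (of_real (1-g) \<cdot>\<^sub>m 1\<^sub>m n1) (of_real (-g) \<cdot>\<^sub>m cmat (transpose_mat A1 * A2)) (0\<^sub>m n2 n1) (1\<^sub>m n2)"
proof -
  have d: "dim_col A1 = n1" "dim_col A2 = n2" using A1 A2 by auto
  define Lf where "Lf = 1\<^sub>m (n1+n2) - four_block_mat (0\<^sub>m n1 n1) (0\<^sub>m n1 n2) (g \<cdot>\<^sub>m (transpose_mat A2 * A1)) (g \<cdot>\<^sub>m 1\<^sub>m n2)"
  define Rf where "Rf = 1\<^sub>m (n1+n2) - four_block_mat (g \<cdot>\<^sub>m 1\<^sub>m n1) (g \<cdot>\<^sub>m (transpose_mat A1 * A2)) (0\<^sub>m n2 n1) (0\<^sub>m n2 n2)"
  have B: "BGD_iter A1 A2 g g = Lf * Rf" unfolding BGD_iter_def Let_def d Lf_def Rf_def o1 o2 ..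
  have Lc: "Lf \<in> carrier_mat (n1+n2) (n1+n2)" "Rf \<in> carrier_mat (n1+n2) (n1+n2)"
    unfolding Lf_def Rf_def by auto
  have C1: "transpose_mat A2 * A1 \<in> carrier_mat n2 n1" and C2: "transpose_mat A1 * A2 \<in> carrier_mat n1 n2"
    using A1 A2 by auto
  have L: "cmat Lf = four_block_mat (1\<^sub>m n1) (0\<^sub>m n1 n2) (of_real (-g) \<cdot>\<^sub>m cmat (transpose_mat A2 * A1)) (of_real (1-g) \<cdot>\<^sub>m 1\<^sub>m n2)"
    unfolding Lf_def
    apply (subst one_minus_fb) using C1 apply (auto simp: minus_carrier_mat)[4]
    apply (subst cmat_four_block[of _ n1 n1 _ n2 _ n2]) using C1 apply (auto simp: minus_carrier_mat)[4]
    using C1 by (simp add: cm1 cm2 cm3 cm4)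
  have R: "cmat Rf = four_block_mat (of_real (1-g) \<cdot>\<^sub>m 1\<^sub>m n1) (of_real (-g) \<cdot>\<^sub>m cmat (transpose_mat A1 * A2)) (0\<^sub>m n2 n1) (1\<^sub>m n2)"
    unfolding Rf_def
    apply (subst one_minus_fb) using C2 apply (auto simp: minus_carrier_mat)[4]
    apply (subst cmat_four_block[of _ n1 n1 _ n2 _ n2]) using C2 apply (auto simp: minus_carrier_mat)[4]
    using C2 by (simp add: cm1 cm2 cm3 cm4)
  show ?thesis unfolding B cmat_mult[OF Lc] L R ..
qed

lemma hb_form:
  assumes A: "A \<in> carrier_mat m nn"
  shows "cmat (HB_iter A \<alpha> \<beta>) = four_block_mat (0\<^sub>m nn nn) (1\<^sub>m nn) (of_real (-\<beta>) \<cdot>\<^sub>m 1\<^sub>m nn)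
     (of_real (1+\<beta>) \<cdot>\<^sub>m 1\<^sub>m nn - of_real \<alpha> \<cdot>\<^sub>m cmat (transpose_mat A * A))"
proof -
  have d: "dim_col A = nn" using A by auto
  have AA: "transpose_mat A * A \<in> carrier_mat nn nn" using A by auto
  show ?thesis unfolding HB_iter_def Let_def d
    apply (subst cmat_four_block[of _ nn nn _ nn _ nn]) using AA apply (auto simp: minus_carrier_mat)[4]
    using AA by (simp add: cmat_zero cmat_one cmat_smult cmat_minus[of _ nn nn])
qed

theorem theorem1:
  fixes A1 A2 :: "real mat" and m n1 n2 :: nat
  assumes "A1 \<in> carrier_mat m n1" and "A2 \<in> carrier_mat m n2"
    and "vec_space.rank m (hcat A1 A2) = n1 + n2"
    and "transpose_mat A1 * A1 = 1\<^sub>m n1"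
    and "transpose_mat A2 * A2 = 1\<^sub>m n2"
    and "transpose_mat A2 * A1 \<noteq> 0\<^sub>m n2 n1"
  shows "rho_BGD_opt A1 A2 \<le> (rho_HB_opt (hcat A1 A2))\<^sup>2"
proof -
  note A1 = assms(1) and A2 = assms(2) and o1 = assms(4) and o2 = assms(5)
  define C where "C = transpose_mat A2 * A1"
  have C: "C \<in> carrier_mat n2 n1" using A1 A2 by (simp add: C_def)
  have CT: "transpose_mat A1 * A2 = transpose_mat C"
    using A1 A2 by (simp add: C_def transpose_mult[of _ n2 m _ n1])
  have n1: "n1 > 0"
  proof (rule ccontr)
    assume "\<not> n1 > 0"
    then have "C = 0\<^sub>m n2 n1" using C by (intro eq_matI) auto
    then show False using assms(6) by (simp add: C_def)
  qed
  have n2: "n2 > 0"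
  proof (rule ccontr)
    assume "\<not> n2 > 0"
    then have "C = 0\<^sub>m n2 n1" using C by (intro eq_matI) auto
    then show False using assms(6) by (simp add: C_def)
  qed
  define Cc where "Cc = cmat C"
  define CTc where "CTc = cmat (transpose_mat C)"
  define Kc where "Kc = cmat (transpose_mat C * C)"
  have Ccc: "Cc \<in> carrier_mat n2 n1" and CTcc: "CTc \<in> carrier_mat n1 n2" and Kcc: "Kc \<in> carrier_mat n1 n1"
    using C by (auto simp: Cc_def CTc_def Kc_def)
  have KcE: "Kc *\<^sub>v v = CTc *\<^sub>v (Cc *\<^sub>v v)" if "v \<in> carrier_vec n1" for v
    using C that by (simp add: Kc_def Cc_def CTc_def cmat_mult[of _ n1 n2 _ n1] assoc_mult_mat_vec[of _ n1 n2 _ n1])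
  define S where "S = spectral_radius Kc"
  have S0: "S \<ge> 0" unfolding S_def by (rule sr_nonneg[OF Kcc n1])
  have eigK: "Im \<mu> = 0 \<and> 0 \<le> Re \<mu> \<and> Re \<mu> \<le> S"
    if v: "v \<in> carrier_vec n1" "v \<noteq> 0\<^sub>v n1" and ev: "CTc *\<^sub>v (Cc *\<^sub>v v) = \<mu> \<cdot>\<^sub>v v" for v \<mu>
  proof -
    have ev': "Kc *\<^sub>v v = \<mu> \<cdot>\<^sub>v v" using KcE[OF v(1)] ev by simp
    have r: "Im \<mu> = 0 \<and> Re \<mu> \<ge> 0" using rayleigh[OF C v(1) v(2)] ev' by (simp add: Kc_def)
    have "eigenvector Kc v \<mu>" using ev' v Kcc by (auto simp: eigenvector_def)
    then have "cmod \<mu> \<le> S" unfolding S_def by (rule sr_ge[OF Kcc n1])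
    moreover have "Re \<mu> \<le> cmod \<mu>" by (rule complex_Re_le_cmod)
    ultimately show ?thesis using r by auto
  qed
  obtain u where u: "u \<in> carrier_vec n1" "u \<noteq> 0\<^sub>v n1" and Ku: "CTc *\<^sub>v (Cc *\<^sub>v u) = of_real S \<cdot>\<^sub>v u"
  proof -
    from spectral_radius_mem_max(1)[OF Kcc n1] obtain \<mu> where mu: "\<mu> \<in> spectrum Kc" "S = cmod \<mu>"
      unfolding S_def by auto
    then obtain v where ev: "eigenvector Kc v \<mu>" by (auto simp: spectrum_def eigenvalue_def)
    then have v: "v \<in> carrier_vec n1" "v \<noteq> 0\<^sub>v n1" "Kc *\<^sub>v v = \<mu> \<cdot>\<^sub>v v" using Kcc by (auto simp: eigenvector_def)
    then have "CTc *\<^sub>v (Cc *\<^sub>v v) = \<mu> \<cdot>\<^sub>v v" using KcE by simp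
    from eigK[OF v(1,2) this] have "Im \<mu> = 0" "Re \<mu> \<ge> 0" by auto
    then have "\<mu> = of_real S" using mu(2) by (simp add: complex_eq_iff cmod_def)
    then show ?thesis using that v KcE by auto
  qed
  define s where "s = sqrt S"
  have s0: "s \<ge> 0" and Ss: "S = s^2" using S0 by (auto simp: s_def)
  define A where "A = hcat A1 A2"
  define nn where "nn = n1 + n2"
  have Ac: "A \<in> carrier_mat m nn" unfolding A_def nn_def by (rule hcat_carrier[OF A1 A2])
  define G where "G = cmat (transpose_mat A * A)"
  have G_eq: "G = four_block_mat (1\<^sub>m n1) CTc Cc (1\<^sub>m n2)"
    unfolding G_def A_def hcat_gram[OF A1 A2] o1 o2 CT C_def[symmetric]
    by (subst cmat_four_block[of _ n1 n1 _ n2 _ n2]) (insert C, auto simp: cmat_one Cc_def CTc_def)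
  have Gc: "G \<in> carrier_mat nn nn" unfolding G_eq nn_def using Ccc CTcc by auto
  have Geig: "G *\<^sub>v (u @\<^sub>v (of_real (\<sigma>/s) \<cdot>\<^sub>v (Cc *\<^sub>v u))) = of_real (1+\<sigma>*s) \<cdot>\<^sub>v (u @\<^sub>v (of_real (\<sigma>/s) \<cdot>\<^sub>v (Cc *\<^sub>v u)))"
     "u @\<^sub>v (of_real (\<sigma>/s) \<cdot>\<^sub>v (Cc *\<^sub>v u)) \<in> carrier_vec nn"
     "u @\<^sub>v (of_real (\<sigma>/s) \<cdot>\<^sub>v (Cc *\<^sub>v u)) \<noteq> 0\<^sub>v nn"
    if "s > 0" "\<sigma>^2 = 1" for \<sigma>
    using G_eig[OF Ccc CTcc u, of s \<sigma>] Ku that unfolding G_eq nn_def Ss by auto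
  have s1: "s \<le> 1"
  proof (cases "s = 0")
    case False
    then have sp: "s > 0" using s0 by simp
    have sg: "(-1::real)^2 = 1" by simp
    note e = Geig[OF sp sg]
    have "Im (complex_of_real (1 + -1*s)) = 0 \<and> 0 \<le> Re (complex_of_real (1 + -1*s))"
      by (rule rayleigh[OF Ac e(2) e(3)]) (use e(1) in \<open>simp add: G_def\<close>)
    then show ?thesis by simp
  qed simp
  define q where "q = (sqrt (1+s) - sqrt (1-s))/(sqrt (1+s) + sqrt (1-s))"
  define g where "g = 2/(1 + sqrt (1+s) * sqrt (1-s))"
  note RF = real_facts[OF S0 s_def s1, folded q_def g_def]
  have g1: "g \<ge> 1" and hg: "g^2 * S \<le> 4*(g-1)" and gq: "g - 1 = q^2" and q0: "q \<ge> 0" and q1: "q \<le> 1"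
    using RF by auto
  have srB: "spectral_radius (cmat (BGD_iter A1 A2 g g)) \<le> g - 1"
  proof (rule sr_le[OF bgd_carrier[OF A1 A2]])
    show "0 < n1 + n2" using n1 by simp
    fix z v assume ev: "eigenvector (cmat (BGD_iter A1 A2 g g)) v z"
    have dr: "dim_row (cmat (BGD_iter A1 A2 g g)) = n1 + n2" by (rule carrier_matD(1)[OF bgd_carrier[OF A1 A2]])
    have v: "v \<in> carrier_vec (n1+n2)" "v \<noteq> 0\<^sub>v (n1+n2)" and evv: "cmat (BGD_iter A1 A2 g g) *\<^sub>v v = z \<cdot>\<^sub>v v"
      using ev dr by (auto simp: eigenvector_def)
    note evv' = evv[unfolded bgd_form[OF A1 A2 o1 o2] CT C_def[symmetric] Cc_def[symmetric] CTc_def[symmetric]]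
    show "cmod z \<le> g - 1"
      by (rule bgd_eig[OF Ccc CTcc v evv' g1 eigK hg]) auto
  qed
  have rB: "rho_BGD_opt A1 A2 \<le> g - 1"
  proof -
    have "rho_BGD_opt A1 A2 \<le> spectral_radius (cmat (BGD_iter A1 A2 g g))"
      unfolding rho_BGD_opt_def
    proof (rule cInf_lower)
      show "spectral_radius (cmat (BGD_iter A1 A2 g g)) \<in> {spectral_radius (cmat (BGD_iter A1 A2 g1 g2)) |g1 g2. 0 < g1 \<and> 0 < g2}"
        using g1 by (intro CollectI exI[of _ g]) auto
      show "bdd_below {spectral_radius (cmat (BGD_iter A1 A2 g1 g2)) |g1 g2. 0 < g1 \<and> 0 < g2}"
        by (rule bdd_belowI[of _ 0]) (use n1 in \<open>auto intro!: sr_nonneg[OF bgd_carrier[OF A1 A2]]\<close>)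
    qed
    then show ?thesis using srB by simp
  qed
  have srH: "q \<le> spectral_radius (cmat (HB_iter A \<alpha> \<beta>))" if ab: "\<alpha> > 0" "\<beta> \<ge> 0" for \<alpha> \<beta>
  proof (cases "s = 0")
    case True
    then have "q = 0" using RF(6) by simp
    then show ?thesis using sr_nonneg[OF hb_carrier[OF Ac]] n1 by (simp add: nn_def)
  next
    case False
    then have sp: "s > 0" using s0 by simp
    have HBf: "cmat (HB_iter A \<alpha> \<beta>) = four_block_mat (0\<^sub>m nn nn) (1\<^sub>m nn) (of_real (-\<beta>) \<cdot>\<^sub>m 1\<^sub>m nn)
       (of_real (1+\<beta>) \<cdot>\<^sub>m 1\<^sub>m nn - of_real \<alpha> \<cdot>\<^sub>m G)" unfolding G_def by (rule hb_form[OF Ac])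
    have nn0: "nn + nn > 0" using n1 by (simp add: nn_def)
    have bound: "cmod (zr (1+\<beta>-\<alpha>*(1+\<sigma>*s)) \<beta>) \<le> spectral_radius (cmat (HB_iter A \<alpha> \<beta>))"
      if sg: "\<sigma>^2 = 1" for \<sigma>
    proof -
      note e = Geig[OF sp sg]
      have "eigenvector (cmat (HB_iter A \<alpha> \<beta>)) ((u @\<^sub>v (of_real (\<sigma>/s) \<cdot>\<^sub>v (Cc *\<^sub>v u))) @\<^sub>v
           (zr (1+\<beta>-\<alpha>*(1+\<sigma>*s)) \<beta> \<cdot>\<^sub>v (u @\<^sub>v (of_real (\<sigma>/s) \<cdot>\<^sub>v (Cc *\<^sub>v u))))) (zr (1+\<beta>-\<alpha>*(1+\<sigma>*s)) \<beta>)"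
        unfolding HBf by (rule hb_eig[OF Gc e(2) e(3) e(1) zr_root])
      then show ?thesis by (rule sr_ge[OF hb_carrier[OF Ac] nn0])
    qed
    have qp: "q > 0" using RF(7) sp by simp
    have rel: "(1-s) * (1+q)^2 = (1+s) * (1-q)^2" using RF(8) .
    have "\<not> (cmod (zr (1+\<beta>-\<alpha>*(1-s)) \<beta>) < q \<and> cmod (zr (1+\<beta>-\<alpha>*(1+s)) \<beta>) < q)"
      by (rule hb_real[OF qp q1 _ _ rel ab]) (use s1 s0 in auto)
    moreover have "cmod (zr (1+\<beta>-\<alpha>*(1-s)) \<beta>) \<le> spectral_radius (cmat (HB_iter A \<alpha> \<beta>))"
      using bound[of "-1"] by simp
    moreover have "cmod (zr (1+\<beta>-\<alpha>*(1+s)) \<beta>) \<le> spectral_radius (cmat (HB_iter A \<alpha> \<beta>))"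
      using bound[of "1"] by simp
    ultimately show ?thesis by linarith
  qed
  have rH: "q \<le> rho_HB_opt A"
    unfolding rho_HB_opt_def
  proof (rule cInf_greatest)
    have "spectral_radius (cmat (HB_iter A 1 0)) \<in> {spectral_radius (cmat (HB_iter A \<alpha> \<beta>)) |\<alpha> \<beta>. 0 < \<alpha> \<and> 0 \<le> \<beta>}"
      by (intro CollectI exI[of _ 1] exI[of _ 0]) auto
    then show "{spectral_radius (cmat (HB_iter A \<alpha> \<beta>)) |\<alpha> \<beta>. 0 < \<alpha> \<and> 0 \<le> \<beta>} \<noteq> {}" by blast
    fix x assume "x \<in> {spectral_radius (cmat (HB_iter A \<alpha> \<beta>)) |\<alpha> \<beta>. 0 < \<alpha> \<and> 0 \<le> \<beta>}"
    then show "q \<le> x" using srH by auto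
  qed
  have "q^2 \<le> (rho_HB_opt A)^2" by (rule power_mono[OF rH q0])
  then have "rho_BGD_opt A1 A2 \<le> (rho_HB_opt A)^2" using rB gq by linarith
  then show ?thesis by (simp only: A_def)
qed


end
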